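(* Assume (D1)–(D3) and that $\mathcal D_\lambda$ is positive definite on $H^1(\mathbb R^4)\times H^1(\mathbb R^4)$. Then $m_a+m_b\ge m_{\lambda,\beta}$ and $\min\{m_a,m_b\}\ge m^*_{\lambda,\beta}$ for all $\beta\in\mathbb R$.
   Context: (D1) $a,b\in C(\mathbb R^4)$, $a,b\ge0$; (D2) $a(x)\to a_\infty\in(0,\infty)$, $b(x)\to b_\infty\in(0,\infty)$ as $|x|\to\infty$, $a\le a_\infty$, $b\le b_\infty$; (D3) $\Omega_a:=\operatorname{int}a^{-1}(0)$, $\Omega_b:=\operatorname{int}b^{-1}(0)$ nonempty bounded smooth domains with $\overline{\Omega_a}=a^{-1}(0)$, $\overline{\Omega_b}=b^{-1}(0)$, $\overline{\Omega_a}\cap\overline{\Omega_b}=\emptyset$. $a_0,b_0\in\mathbb R$, $\lambda>0$. $\mathcal D_\lambda(u,v)=\int(|\nabla u|^2+(\lambda a+a_0)u^2)+\int(|\nabla v|^2+(\lambda b+b_0)v^2)$, $J_{\lambda,\beta}(u,v)=\frac12\mathcal D_\lambda(u,v)-\frac14\int(u^4+v^4+2\beta u^2v^2)$ on $H^1(\mathbb R^4)^2$. $\mathcal N_{\lambda,\beta}=\{(u,v):u\ne0,v\ne0,\langle J'_{\lambda,\beta}(u,v),(u,0)\rangle=\langle J'_{\lambda,\beta}(u,v),(0,v)\rangle=0\}$, $\mathcal M_{\lambda,\beta}=\{(u,v)\ne(0,0):\langle J'_{\lambda,\beta}(u,v),(u,v)\rangle=0\}$, $m_{\lambda,\beta}=\inf_{\mathcal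 N_{\lambda,\beta}}J_{\lambda,\beta}$, $m^*_{\lambda,\beta}=\inf_{\mathcal M_{\lambda,\beta}}J_{\lambda,\beta}$. $I_{\Omega_a}(u)=\frac12\int_{\Omega_a}(|\nabla u|^2+a_0u^2)-\frac14\int_{\Omega_a}u^4$ on $H^1_0(\Omega_a)$, $\mathcal N_a=\{u\in H^1_0(\Omega_a)\setminus\{0\}:I'_{\Omega_a}(u)u=0\}$, $m_a=\inf_{\mathcal N_a}I_{\Omega_a}$; $I_{\Omega_b},\mathcal N_b,m_b$ analogously with $\Omega_b,b_0$. *)

theory Defs
  imports "HOL-Analysis.Analysis"
begin

type_synonym R4 = "real^4"

definition pd :: "4 \<Rightarrow> (R4 \<Rightarrow> real) \<Rightarrow> R4 \<Rightarrow> real" where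
  "pd i f x = frechet_derivative f (at x) (axis i 1)"

definition Cinf :: "(R4 \<Rightarrow> real) set" where
  "Cinf = \<Union>{F. \<forall>g\<in>F. (\<forall>x. g differentiable (at x)) \<and> (\<forall>i. pd i g \<in> F)}"

definition Cc_inf :: "R4 set \<Rightarrow> (R4 \<Rightarrow> real) set" where
  "Cc_inf U = {\<phi> \<in> Cinf. compact (closure {x. \<phi> x \<noteq> 0}) \<and> closure {x. \<phi> x \<noteq> 0} \<subseteq> U}"

definition L2 :: "(R4 \<Rightarrow> real) \<Rightarrow> bool" where
  "L2 u \<longleftrightarrow> u \<in> borel_measurable lborel \<and> integrable lborel (\<lambda>x. (u x)^2)"

definition weak_grad :: "(R4 \<Rightarrow> real) \<Rightarrow> (R4 \<Rightarrow> R4) \<Rightarrow> bool" where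
  "weak_grad u g \<longleftrightarrow> (\<forall>\<phi>\<in>Cc_inf UNIV. \<forall>i.
      (\<integral>x. u x * pd i \<phi> x \<partial>lborel) = - (\<integral>x. g x $ i * \<phi> x \<partial>lborel))"

text \<open>H^1(R^4) (functions, identified a.e. only through the integrals below).\<close>
definition H1 :: "(R4 \<Rightarrow> real) set" where
  "H1 = {u. L2 u \<and> (\<exists>g. (\<forall>i. L2 (\<lambda>x. g x $ i)) \<and> weak_grad u g)}"

definition grad :: "(R4 \<Rightarrow> real) \<Rightarrow> R4 \<Rightarrow> R4" where
  "grad u = (SOME g. (\<forall>i. L2 (\<lambda>x. g x $ i)) \<and> weak_grad u g)"

definition H1norm_sq :: "(R4 \<Rightarrow> real) \<Rightarrow> real" where
  "H1norm_sq u = (\<integral>x. (u x)^2 \<partial>lborel) + (\<integral>x. (norm (grad u x))^2 \<partial>lborel)"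

text \<open>H^1_0(\<Omega>): H^1-closure of C_c^\<infinity>(\<Omega>), elements extended by zero to R^4.\<close>
definition H10 :: "R4 set \<Rightarrow> (R4 \<Rightarrow> real) set" where
  "H10 \<Omega> = {u \<in> H1. \<exists>\<phi>. (\<forall>n. \<phi> n \<in> Cc_inf \<Omega>) \<and>
                 (\<lambda>n. H1norm_sq (\<lambda>x. \<phi> n x - u x)) \<longlonglongrightarrow> 0}"

definition nonzero :: "(R4 \<Rightarrow> real) \<Rightarrow> bool" where
  "nonzero u \<longleftrightarrow> \<not> (AE x in lborel. u x = 0)"

definition smooth_domain :: "R4 set \<Rightarrow> bool" where
  "smooth_domain \<Omega> \<longleftrightarrow> open \<Omega> \<and> connected \<Omega> \<and> \<Omega> \<noteq> {} \<and>
     (\<forall>p\<in>frontier \<Omega>. \<exists>r>0. \<exists>\<rho>\<in>Cinf.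
        (\<forall>x\<in>ball p r. (\<exists>i. pd i \<rho> x \<noteq> 0)) \<and>
        \<Omega> \<inter> ball p r = {x\<in>ball p r. \<rho> x < 0})"

definition I_dom :: "R4 set \<Rightarrow> real \<Rightarrow> (R4 \<Rightarrow> real) \<Rightarrow> real" where
  "I_dom \<Omega> c u = 1/2 * (\<integral>x\<in>\<Omega>. (norm (grad u x))^2 + c * (u x)^2 \<partial>lborel)
                 - 1/4 * (\<integral>x\<in>\<Omega>. (u x)^4 \<partial>lborel)"

text \<open>I'(u)u.\<close>
definition dI_dom :: "R4 set \<Rightarrow> real \<Rightarrow> (R4 \<Rightarrow> real) \<Rightarrow> real" where
  "dI_dom \<Omega> c u = (\<integral>x\<in>\<Omega>. (norm (grad u x))^2 + c * (u x)^2 \<partial>lborel)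
                 - (\<integral>x\<in>\<Omega>. (u x)^4 \<partial>lborel)"

definition Neh :: "R4 set \<Rightarrow> real \<Rightarrow> (R4 \<Rightarrow> real) set" where
  "Neh \<Omega> c = {u \<in> H10 \<Omega>. nonzero u \<and> dI_dom \<Omega> c u = 0}"

definition m_dom :: "R4 set \<Rightarrow> real \<Rightarrow> ereal" where
  "m_dom \<Omega> c = Inf (ereal ` I_dom \<Omega> c ` Neh \<Omega> c)"

definition Dq :: "(R4 \<Rightarrow> real) \<Rightarrow> real \<Rightarrow> real \<Rightarrow> (R4 \<Rightarrow> real) \<Rightarrow> real" where
  "Dq a a0 lam u = (\<integral>x. (norm (grad u x))^2 + (lam * a x + a0) * (u x)^2 \<partial>lborel)"

definition D_lam :: "(R4 \<Rightarrow> real) \<Rightarrow> (R4 \<Rightarrow> real) \<Rightarrow> real \<Rightarrow> real \<Rightarrow> real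
    \<Rightarrow> (R4 \<Rightarrow> real) \<Rightarrow> (R4 \<Rightarrow> real) \<Rightarrow> real" where
  "D_lam a b a0 b0 lam u v = Dq a a0 lam u + Dq b b0 lam v"

definition J :: "(R4 \<Rightarrow> real) \<Rightarrow> (R4 \<Rightarrow> real) \<Rightarrow> real \<Rightarrow> real \<Rightarrow> real \<Rightarrow> real
    \<Rightarrow> (R4 \<Rightarrow> real) \<Rightarrow> (R4 \<Rightarrow> real) \<Rightarrow> real" where
  "J a b a0 b0 lam \<beta> u v = 1/2 * D_lam a b a0 b0 lam u v
     - 1/4 * (\<integral>x. (u x)^4 + (v x)^4 + 2 * \<beta> * (u x)^2 * (v x)^2 \<partial>lborel)"

text \<open>\<langle>J'(u,v),(u,0)\<rangle> and \<langle>J'(u,v),(0,v)\<rangle>, written out.\<close>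
definition dJ1 :: "(R4 \<Rightarrow> real) \<Rightarrow> real \<Rightarrow> real \<Rightarrow> real
    \<Rightarrow> (R4 \<Rightarrow> real) \<Rightarrow> (R4 \<Rightarrow> real) \<Rightarrow> real" where
  "dJ1 a a0 lam \<beta> u v = Dq a a0 lam u - (\<integral>x. (u x)^4 + \<beta> * (u x)^2 * (v x)^2 \<partial>lborel)"

definition N_sys :: "(R4 \<Rightarrow> real) \<Rightarrow> (R4 \<Rightarrow> real) \<Rightarrow> real \<Rightarrow> real \<Rightarrow> real \<Rightarrow> real
    \<Rightarrow> ((R4 \<Rightarrow> real) \<times> (R4 \<Rightarrow> real)) set" where
  "N_sys a b a0 b0 lam \<beta> = {(u, v). u \<in> H1 \<and> v \<in> H1 \<and> nonzero u \<and> nonzero v \<and>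
      dJ1 a a0 lam \<beta> u v = 0 \<and> dJ1 b b0 lam \<beta> v u = 0}"

definition M_sys :: "(R4 \<Rightarrow> real) \<Rightarrow> (R4 \<Rightarrow> real) \<Rightarrow> real \<Rightarrow> real \<Rightarrow> real \<Rightarrow> real
    \<Rightarrow> ((R4 \<Rightarrow> real) \<times> (R4 \<Rightarrow> real)) set" where
  "M_sys a b a0 b0 lam \<beta> = {(u, v). u \<in> H1 \<and> v \<in> H1 \<and> (nonzero u \<or> nonzero v) \<and>
      dJ1 a a0 lam \<beta> u v + dJ1 b b0 lam \<beta> v u = 0}"

definition m_sys :: "(R4 \<Rightarrow> real) \<Rightarrow> (R4 \<Rightarrow> real) \<Rightarrow> real \<Rightarrow> real \<Rightarrow> real \<Rightarrow> real \<Rightarrow> ereal" where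
  "m_sys a b a0 b0 lam \<beta> =
     Inf ((\<lambda>(u, v). ereal (J a b a0 b0 lam \<beta> u v)) ` N_sys a b a0 b0 lam \<beta>)"

definition mstar_sys :: "(R4 \<Rightarrow> real) \<Rightarrow> (R4 \<Rightarrow> real) \<Rightarrow> real \<Rightarrow> real \<Rightarrow> real \<Rightarrow> real \<Rightarrow> ereal" where
  "mstar_sys a b a0 b0 lam \<beta> =
     Inf ((\<lambda>(u, v). ereal (J a b a0 b0 lam \<beta> u v)) ` M_sys a b a0 b0 lam \<beta>)"

end

theory Submission
  imports Defs "HOL-Computational_Algebra.Polynomial"
begin

definition S1 :: "(real \<Rightarrow> real) set" where
  "S1 = \<Union>{F. \<forall>g\<in>F. \<exists>g'\<in>F. \<forall>x. (g has_real_derivative g' x) (at x)}"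

lemma S1_coinduct:
  assumes "\<And>g. g \<in> F \<Longrightarrow> \<exists>g'\<in>F. \<forall>x. (g has_real_derivative g' x) (at x)"
  shows "F \<subseteq> S1"
  using assms unfolding S1_def by blast

lemma S1_D:
  assumes "g \<in> S1" shows "\<exists>g'\<in>S1. \<forall>x. (g has_real_derivative g' x) (at x)"
proof -
  from assms obtain F where F: "\<forall>g\<in>F. \<exists>g'\<in>F. \<forall>x. (g has_real_derivative g' x) (at x)" "g \<in> F"
    unfolding S1_def by blast
  then have "F \<subseteq> S1" unfolding S1_def by blast
  with F show ?thesis by blast
qed

definition D1 :: "(real \<Rightarrow> real) \<Rightarrow> (real \<Rightarrow> real)" where
  "D1 g = (SOME g'. g' \<in> S1 \<and> (\<forall>x. (g has_real_derivative g' x) (at x)))"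

lemma D1: assumes "g \<in> S1" shows "D1 g \<in> S1" "\<And>x. (g has_real_derivative D1 g x) (at x)"
proof -
  have "\<exists>g'. g' \<in> S1 \<and> (\<forall>x. (g has_real_derivative g' x) (at x))" using S1_D[OF assms] by blast
  from someI_ex[OF this] show "D1 g \<in> S1" "\<And>x. (g has_real_derivative D1 g x) (at x)"
    unfolding D1_def by blast+
qed

lemma S1_const: "(\<lambda>_. c) \<in> S1"
proof -
  have "range (\<lambda>c. (\<lambda>_::real. c)) \<subseteq> S1"
    by (rule S1_coinduct) (auto intro!: bexI[of _ "\<lambda>_. 0"] derivative_eq_intros)
  then show ?thesis by auto
qed

definition SP :: "((real \<Rightarrow> real) \<times> (real \<Rightarrow> real)) list \<Rightarrow> real \<Rightarrow> real" where
  "SP L x = (\<Sum>p\<leftarrow>L. fst p x * snd p x)"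

definition DL :: "((real \<Rightarrow> real) \<times> (real \<Rightarrow> real)) list \<Rightarrow> ((real \<Rightarrow> real) \<times> (real \<Rightarrow> real)) list" where
  "DL L = concat (map (\<lambda>p. [(D1 (fst p), snd p), (fst p, D1 (snd p))]) L)"

lemma DL_deriv:
  assumes "set L \<subseteq> S1 \<times> S1"
  shows "set (DL L) \<subseteq> S1 \<times> S1 \<and> (\<forall>x. (SP L has_real_derivative SP (DL L) x) (at x))"
  using assms
proof (induction L)
  case Nil
  then show ?case by (simp add: DL_def SP_def)
next
  case (Cons p L)
  obtain f g where p: "p = (f, g)" by force
  have fg: "f \<in> S1" "g \<in> S1" using Cons.prems p by auto
  have IH: "set (DL L) \<subseteq> S1 \<times> S1" "\<And>x. (SP L has_real_derivative SP (DL L) x) (at x)"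
    using Cons by auto
  have e1: "SP (p # L) = (\<lambda>x. f x * g x + SP L x)" by (auto simp: SP_def p)
  have e2: "SP (DL (p # L)) x = D1 f x * g x + f x * D1 g x + SP (DL L) x" for x
    by (simp add: DL_def SP_def p)
  show ?case
    unfolding e1 e2
    using IH fg D1[OF fg(1)] D1[OF fg(2)]
    by (auto simp: DL_def p intro!: derivative_eq_intros)
qed

lemma S1_SP: assumes "set L \<subseteq> S1 \<times> S1" shows "SP L \<in> S1"
proof -
  have "{SP L | L. set L \<subseteq> S1 \<times> S1} \<subseteq> S1"
  proof (rule S1_coinduct)
    fix g assume "g \<in> {SP L |L. set L \<subseteq> S1 \<times> S1}"
    then obtain L where "g = SP L" "set L \<subseteq> S1 \<times> S1" by blast
    then show "\<exists>g'\<in>{SP L |L. set L \<subseteq> S1 \<times> S1}. \<forall>x. (g has_real_derivative g' x) (at x)"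
      using DL_deriv by blast
  qed
  with assms show ?thesis by blast
qed

lemma S1_mult: assumes "f \<in> S1" "g \<in> S1" shows "(\<lambda>x. f x * g x) \<in> S1"
proof -
  have "SP [(f,g)] \<in> S1" using assms by (intro S1_SP) auto
  moreover have "SP [(f,g)] = (\<lambda>x. f x * g x)" by (rule ext) (simp add: SP_def)
  ultimately show ?thesis by simp
qed

lemma S1_affine: assumes "f \<in> S1" shows "(\<lambda>t. f (a * t + b)) \<in> S1"
proof -
  let ?F = "{(\<lambda>t. c * f (a * t + b)) | c f. f \<in> S1}"
  have "?F \<subseteq> S1"
  proof (rule S1_coinduct)
    fix g assume "g \<in> ?F"
    then obtain c f where g: "g = (\<lambda>t. c * f (a * t + b))" "f \<in> S1" by blast
    have "(g has_real_derivative (c * a) * D1 f (a * x + b)) (at x)" for x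
    proof -
      have l: "((\<lambda>t. a * t + b) has_real_derivative a) (at x)"
        by (auto intro!: derivative_eq_intros)
      have "((\<lambda>t. f (a * t + b)) has_real_derivative D1 f (a * x + b) * a) (at x)"
        by (rule DERIV_chain2[OF D1(2)[OF g(2)] l])
      then show ?thesis unfolding g(1) using DERIV_cmult by (metis mult.assoc mult.commute)
    qed
    moreover have "(\<lambda>t. (c * a) * D1 f (a * t + b)) \<in> ?F" using D1[OF g(2)] by blast
    ultimately show "\<exists>g'\<in>?F. \<forall>x. (g has_real_derivative g' x) (at x)"
      by (intro bexI[of _ "\<lambda>t. (c * a) * D1 f (a * t + b)"]) auto
  qed
  moreover have "(\<lambda>t. 1 * f (a * t + b)) \<in> ?F" using assms by blast
  ultimately show ?thesis by auto
qed

lemma pow_exp_lim: assumes "c > 0" shows "((\<lambda>t::real. t^k * exp (-c*t)) \<longlongrightarrow> 0) at_top"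
proof -
  have f: "filterlim (\<lambda>t::real. c * t) at_top at_top"
    using assms by (intro filterlim_tendsto_pos_mult_at_top[OF tendsto_const]) (auto simp: filterlim_ident)
  have "((\<lambda>t. (c*t)^k / exp (c*t)) \<longlongrightarrow> 0) at_top"
    using filterlim_compose[OF tendsto_power_div_exp_0 f] by simp
  then have "((\<lambda>t. (c*t)^k / exp (c*t) / c^k) \<longlongrightarrow> 0 / c^k) at_top"
    by (intro tendsto_divide) (use assms in auto)
  moreover have "(c*t)^k / exp (c*t) / c^k = t^k * exp (-c*t)" for t
    using assms by (simp add: power_mult_distrib exp_minus field_simps)
  ultimately show ?thesis by simp
qed

lemma poly_exp_lim: assumes "c > 0"
  shows "((\<lambda>t::real. poly p t * exp (-c*t) * t) \<longlongrightarrow> 0) at_top"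
proof -
  have "poly p t * exp (-c*t) * t = (\<Sum>i\<le>degree p. coeff p i * (t^(Suc i) * exp (-c*t)))" for t
    by (simp add: poly_altdef sum_distrib_right sum_distrib_left algebra_simps)
  moreover have "((\<lambda>t. \<Sum>i\<le>degree p. coeff p i * (t^(Suc i) * exp (-c*t))) \<longlongrightarrow> 0) at_top"
    by (intro tendsto_null_sum tendsto_mult_right_zero pow_exp_lim assms)
  ultimately show ?thesis by simp
qed

definition EP :: "real \<Rightarrow> real poly \<Rightarrow> real \<Rightarrow> real" where
  "EP c p s = (if s > 0 then poly p (1/s) * exp (-c/s) else 0)"

definition dEP :: "real \<Rightarrow> real poly \<Rightarrow> real poly" where
  "dEP c p = [:0,0,1:] * (smult c p - pderiv p)"

lemma EP_deriv: assumes "c > 0" shows "(EP c p has_real_derivative EP c (dEP c p) x) (at x)"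
proof (cases "x > 0")
  case True
  have d: "((\<lambda>s. poly p (1/s) * exp (-c/s)) has_real_derivative
      poly (pderiv p) (1/x) * (- 1 / x^2) * exp (-c/x) + exp (-c/x) * (c / x^2) * poly p (1/x)) (at x)"
  proof -
    have i: "((\<lambda>s. 1/s) has_real_derivative (- 1 / x^2)) (at x)"
      using True DERIV_inverse[of x] by (simp add: inverse_eq_divide power2_eq_square)
    have a: "((\<lambda>s. poly p (1/s)) has_real_derivative poly (pderiv p) (1/x) * (- 1 / x^2)) (at x)"
      by (rule DERIV_chain2[OF poly_DERIV i])
    have j: "((\<lambda>s. -c/s) has_real_derivative (c / x^2)) (at x)"
      using DERIV_cmult[OF i, of "-c"] by (simp add: divide_simps)
    have b: "((\<lambda>s. exp (-c/s)) has_real_derivative exp (-c/x) * (c / x^2)) (at x)"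
      by (rule DERIV_chain2[OF DERIV_exp j])
    show ?thesis by (rule DERIV_mult[OF a b])
  qed
  have eq: "poly (pderiv p) (1/x) * (- 1 / x^2) * exp (-c/x) + exp (-c/x) * (c / x^2) * poly p (1/x)
      = EP c (dEP c p) x"
    proof -
    have e1: "- 1 / x^2 = - ((1/x)^2)" "c / x^2 = c * (1/x)^2" by (simp_all add: power_divide)
    have e2: "EP c (dEP c p) x = poly ([:0,0,1:] * (smult c p - pderiv p)) (1/x) * exp (-c/x)"
      using True by (simp add: EP_def dEP_def)
    have e3: "poly [:0,0,1:] y = y * y" for y :: real by simp
    have aux: "a * - (y^2) * E + E * (c * y^2) * b = (y*y) * (c*b - a) * E" for a b y E :: real
      by (simp add: algebra_simps power2_eq_square)
    show ?thesis unfolding e1 e2 poly_mult poly_diff poly_smult e3 aux ..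

  qed
  from d have "((\<lambda>s. poly p (1/s) * exp (-c/s)) has_real_derivative EP c (dEP c p) x) (at x)" unfolding eq .
  then show ?thesis
    by (rule has_field_derivative_transform_within_open[where S="{0<..}"]) (use True in \<open>auto simp: EP_def\<close>)
next
  case False
  show ?thesis
  proof (cases "x < 0")
    case True
    have "((\<lambda>_. 0) has_real_derivative 0) (at x)" by (rule DERIV_const)
    then have "(EP c p has_real_derivative 0) (at x)"
      by (rule has_field_derivative_transform_within_open[where S="{..<0}"]) (use True in \<open>auto simp: EP_def\<close>)
    then show ?thesis using True by (simp add: EP_def)
  next
    case False
    with \<open>\<not> x > 0\<close> have x: "x = 0" by simp
    have EP0: "EP c p 0 = 0" by (simp add: EP_def)
    have "((\<lambda>y. (EP c p y - EP c p 0) / (y - 0)) \<longlongrightarrow> 0) (at 0)"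
    proof (rule filterlim_split_at)
      show "((\<lambda>y. (EP c p y - EP c p 0) / (y - 0)) \<longlongrightarrow> 0) (at_left 0)"
      proof (rule tendsto_eventually)
        have "\<forall>\<^sub>F y in at_left (0::real). y < 0" by (simp add: eventually_at_left_field) (auto intro: exI[of _ "-1"])
        then show "\<forall>\<^sub>F y in at_left (0::real). (EP c p y - EP c p 0) / (y - 0) = 0"
          by (auto elim!: eventually_mono simp: EP_def)
      qed
      have "((\<lambda>t. poly p t * exp (-c*t) * t) \<longlongrightarrow> 0) at_top" by (rule poly_exp_lim[OF assms])
      moreover have "\<forall>\<^sub>F t in at_top. poly p t * exp (-c*t) * t = (EP c p (inverse t) - EP c p 0) / (inverse t - 0)"
      proof -
        have H: "poly p t * exp (-c*t) * t = (EP c p (inverse t) - EP c p 0) / (inverse t - 0)" if "t > 0" for t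
        proof -
          have "EP c p (inverse t) = poly p t * exp (-c*t)" using that by (simp add: EP_def divide_inverse)
          then show ?thesis using that EP0 by (simp add: divide_inverse)
        qed
        show ?thesis by (rule eventually_mono[OF eventually_gt_at_top[of 0]]) (rule H)
      qed
      ultimately have "((\<lambda>t. (EP c p (inverse t) - EP c p 0) / (inverse t - 0)) \<longlongrightarrow> 0) at_top"
        by (rule Lim_transform_eventually)
      then show "((\<lambda>y. (EP c p y - EP c p 0) / (y - 0)) \<longlongrightarrow> 0) (at_right 0)"
        unfolding filterlim_at_right_to_top .
    qed
    then have "(EP c p has_real_derivative 0) (at 0)" by (simp add: has_field_derivative_iff)
    then show ?thesis using x by (simp add: EP_def)
  qed
qed

lemma EP_S1: assumes "c > 0" shows "EP c p \<in> S1"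
proof -
  have "range (EP c) \<subseteq> S1"
    by (rule S1_coinduct) (use EP_deriv[OF assms] in blast)
  then show ?thesis by auto
qed

lemma ec_S1: assumes "c > 0" shows "(\<lambda>s. if s > 0 then exp (-c/s) else 0) \<in> S1"
proof -
  have "EP c 1 = (\<lambda>s. if s > 0 then exp (-c/s) else 0)" by (rule ext) (simp add: EP_def)
  with EP_S1[OF assms, of 1] show ?thesis by simp
qed

lemma comp_deriv:
  assumes "(f has_real_derivative d) (at (y $ i))"
  shows "((\<lambda>x::R4. f (x $ i)) has_derivative (\<lambda>h. d * h $ i)) (at y)"
proof -
  have l: "((\<lambda>x::R4. x $ i) has_derivative (\<lambda>h. h $ i)) (at y)"
    by (rule bounded_linear_imp_has_derivative) (rule bounded_linear_vec_nth)
  have "(f has_derivative (*) d) (at (y $ i))" by (rule has_field_derivative_imp_has_derivative[OF assms])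
  from has_derivative_compose[OF l this] show ?thesis .
qed

lemma prod_deriv:
  assumes "\<And>i. f i \<in> S1"
  shows "((\<lambda>x::R4. \<Prod>i\<in>UNIV. f i (x $ i)) has_derivative
     (\<lambda>h. \<Sum>i\<in>UNIV. D1 (f i) (y $ i) * h $ i * (\<Prod>j\<in>UNIV - {i}. f j (y $ j)))) (at y)"
  by (rule has_derivative_prod) (rule comp_deriv[OF D1(2)[OF assms]])

lemma pd_prod:
  assumes "\<And>i. f i \<in> S1"
  shows "pd k (\<lambda>x::R4. \<Prod>i\<in>UNIV. f i (x $ i)) y = (\<Prod>i\<in>UNIV. (f(k := D1 (f k))) i (y $ i))"
proof -
  have "pd k (\<lambda>x::R4. \<Prod>i\<in>UNIV. f i (x $ i)) y =
     (\<Sum>i\<in>UNIV. D1 (f i) (y $ i) * (axis k 1 :: R4) $ i * (\<Prod>j\<in>UNIV - {i}. f j (y $ j)))"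
    unfolding pd_def frechet_derivative_at[OF prod_deriv[of f y, OF assms], symmetric] ..
  also have "\<dots> = (\<Sum>i\<in>UNIV. if i = k then D1 (f k) (y $ k) * (\<Prod>j\<in>UNIV - {k}. f j (y $ j)) else 0)"
    by (rule sum.cong) (auto simp: axis_def)
  also have "\<dots> = D1 (f k) (y $ k) * (\<Prod>j\<in>UNIV - {k}. f j (y $ j))" by simp
  also have "\<dots> = (\<Prod>i\<in>UNIV. (f(k := D1 (f k))) i (y $ i))"
    by (simp add: prod.remove[of UNIV k])
  finally show ?thesis .
qed

lemma Q_Cinf:
  assumes "\<And>i. f i \<in> S1"
  shows "(\<lambda>x::R4. \<Prod>i\<in>UNIV. f i (x $ i)) \<in> Cinf"
proof -
  let ?Q = "{(\<lambda>x::R4. \<Prod>i\<in>UNIV. f i (x $ i)) | f. \<forall>i. f i \<in> S1}"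
  have "\<forall>g\<in>?Q. (\<forall>x. g differentiable (at x)) \<and> (\<forall>i. pd i g \<in> ?Q)"
  proof
    fix g assume "g \<in> ?Q"
    then obtain f where g: "g = (\<lambda>x::R4. \<Prod>i\<in>UNIV. f i (x $ i))" "\<And>i. f i \<in> S1" by blast
    have "g differentiable (at x)" for x
      unfolding g(1) differentiable_def using prod_deriv[of f x, OF g(2)] by blast
    moreover have "pd k g \<in> ?Q" for k
    proof -
      have "pd k g = (\<lambda>y. \<Prod>i\<in>UNIV. (f(k := D1 (f k))) i (y $ i))"
        unfolding g(1) by (rule ext) (rule pd_prod[OF g(2)])
      moreover have "\<forall>i. (f(k := D1 (f k))) i \<in> S1" using g(2) D1(1)[OF g(2)] by auto
      ultimately show ?thesis by blast
    qed
    ultimately show "(\<forall>x. g differentiable (at x)) \<and> (\<forall>i. pd i g \<in> ?Q)" by blast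
  qed
  then have "?Q \<subseteq> Cinf" unfolding Cinf_def by blast
  then show ?thesis using assms by blast
qed

lemma Cinf_D: assumes "g \<in> Cinf" shows "g differentiable (at x)" "pd i g \<in> Cinf"
  using assms unfolding Cinf_def by blast+

definition ec :: "real \<Rightarrow> real \<Rightarrow> real" where
  "ec c s = (if s > 0 then exp (-c/s) else 0)"

definition bump1 :: "real \<Rightarrow> real \<Rightarrow> real \<Rightarrow> real \<Rightarrow> real" where
  "bump1 c al be t = ec c (t - al) * ec c (be - t)"

lemma bump1_S1: assumes "c > 0" shows "bump1 c al be \<in> S1"
proof -
  have e: "ec c \<in> S1" using ec_S1[OF assms] by (simp add: ec_def[abs_def])
  have "(\<lambda>t. ec c (1 * t + (-al))) \<in> S1" "(\<lambda>t. ec c ((-1) * t + be)) \<in> S1"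
    by (rule S1_affine[OF e])+
  then have "(\<lambda>t. ec c (1 * t + (-al)) * ec c ((-1) * t + be)) \<in> S1" by (rule S1_mult)
  then show ?thesis by (simp add: bump1_def[abs_def])
qed

definition bump :: "real \<Rightarrow> R4 \<Rightarrow> R4 \<Rightarrow> R4 \<Rightarrow> real" where
  "bump c al be x = (\<Prod>i\<in>UNIV. bump1 c (al $ i) (be $ i) (x $ i))"

lemma bump_Cinf: assumes "c > 0" shows "bump c al be \<in> Cinf"
  unfolding bump_def[abs_def] by (rule Q_Cinf) (rule bump1_S1[OF assms])

lemma bump1_eq: "bump1 c a b t = (if a < t \<and> t < b then exp (-c/(t-a)) * exp (-c/(b-t)) else 0)"
  by (auto simp: bump1_def ec_def)

lemma bump1_nonneg: "0 \<le> bump1 c a b t" by (simp add: bump1_eq)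

lemma bump1_le1: assumes "c \<ge> 0" shows "bump1 c a b t \<le> 1"
proof -
  have "exp (-c/(t-a)) * exp (-c/(b-t)) \<le> 1 * 1" if "a < t" "t < b"
    using that assms by (intro mult_mono) (auto simp: divide_nonneg_pos)
  then show ?thesis by (auto simp: bump1_eq)
qed

lemma bump_nonneg: "0 \<le> bump c al be x"
  unfolding bump_def by (intro prod_nonneg) (auto simp: bump1_nonneg)

lemma bump_le1: assumes "c \<ge> 0" shows "bump c al be x \<le> 1"
  unfolding bump_def by (intro prod_le_1) (auto simp: bump1_nonneg bump1_le1[OF assms])

lemma bump_nz: "bump c al be x \<noteq> 0 \<longleftrightarrow> x \<in> box al be"
  by (auto simp: bump_def bump1_eq mem_box_cart)

lemma bump_lim:
  "(\<lambda>n. bump (1 / real (Suc n)) al be x) \<longlonglongrightarrow> indicator (box al be) x"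
proof (cases "x \<in> box al be")
  case True
  have c: "(\<lambda>n. 1 / real (Suc n)) \<longlonglongrightarrow> 0" by (rule LIMSEQ_Suc[OF lim_const_over_n])
  have "(\<lambda>n. \<Prod>i\<in>UNIV. bump1 (1 / real (Suc n)) (al $ i) (be $ i) (x $ i)) \<longlonglongrightarrow> (\<Prod>i\<in>(UNIV::4 set). 1)"
  proof (rule tendsto_prod)
    fix i :: 4
    have lt: "al $ i < x $ i" "x $ i < be $ i" using True by (auto simp: mem_box_cart)
    have "(\<lambda>n. exp (- (1 / real (Suc n)) / (x $ i - al $ i)) * exp (- (1 / real (Suc n)) / (be $ i - x $ i)))
        \<longlonglongrightarrow> exp (- 0 / (x $ i - al $ i)) * exp (- 0 / (be $ i - x $ i))"
      by (intro tendsto_intros c) (use lt in auto)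
    then show "(\<lambda>n. bump1 (1 / real (Suc n)) (al $ i) (be $ i) (x $ i)) \<longlonglongrightarrow> 1"
      using lt by (simp add: bump1_eq)
  qed
  then show ?thesis using True by (simp add: bump_def)
next
  case False
  then show ?thesis using bump_nz[of _ al be x] by simp
qed

lemma bump_Cc: assumes "c > 0" "box al be \<noteq> {}" "cbox al be \<subseteq> U"
  shows "bump c al be \<in> Cc_inf U"
proof -
  have "{x. bump c al be x \<noteq> 0} = box al be" using bump_nz by blast
  then have cl: "closure {x. bump c al be x \<noteq> 0} = cbox al be" using assms(2) by simp
  show ?thesis unfolding Cc_inf_def mem_Collect_eq cl using bump_Cinf[OF assms(1)] assms(3) compact_cbox by blast
qed

lemma Cinf_cont: "g \<in> Cinf \<Longrightarrow> continuous_on UNIV g"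
  using Cinf_D(1) by (meson continuous_at_imp_continuous_on differentiable_imp_continuous_within)

lemma L2_meas: "L2 h \<Longrightarrow> h \<in> borel_measurable lborel" by (simp add: L2_def)

lemma L2_int_set:
  assumes "L2 h" "S \<in> sets lborel" "emeasure lborel S < \<infinity>"
  shows "integrable lborel (\<lambda>x. indicator S x * h x)"
proof (rule Bochner_Integration.integrable_bound)
  show "integrable lborel (\<lambda>x. (h x)^2 + indicator S x)"
    using assms by (intro Bochner_Integration.integrable_add) (auto simp: L2_def)
  show "(\<lambda>x. indicator S x * h x) \<in> borel_measurable lborel"
    using assms by (auto simp: L2_def)
  show "AE x in lborel. norm (indicator S x * h x) \<le> norm ((h x)^2 + indicator S x)"
  proof (rule AE_I2)
    fix x
    have "\<bar>h x\<bar> \<le> (h x)^2 + 1"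
    proof (cases "\<bar>h x\<bar> \<le> 1")
      case True then show ?thesis by (smt (verit) zero_le_power2)
    next
      case False
      then have "\<bar>h x\<bar> * 1 \<le> \<bar>h x\<bar> * \<bar>h x\<bar>" by (intro mult_left_mono) auto
      then show ?thesis by (simp add: power2_eq_square)
    qed
    then show "norm (indicator S x * h x) \<le> norm ((h x)^2 + indicator S x)"
      by (auto simp: indicator_def)
  qed
qed

lemma box_integral_zero:
  fixes h :: "R4 \<Rightarrow> real"
  assumes "L2 h" "\<forall>\<phi>\<in>Cc_inf U. (\<integral>x. h x * \<phi> x \<partial>lborel) = 0"
    and "box al be \<noteq> {}" "cbox al be \<subseteq> U"
  shows "(\<integral>x. h x * indicator (box al be) x \<partial>lborel) = 0"
proof -
  let ?s = "\<lambda>n x. h x * bump (1 / real (Suc n)) al be x"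
  have hm: "h \<in> borel_measurable lborel" using assms(1) by (simp add: L2_def)
  have lim: "(\<lambda>n. integral\<^sup>L lborel (?s n)) \<longlonglongrightarrow> (\<integral>x. h x * indicator (box al be) x \<partial>lborel)"
  proof (rule integral_dominated_convergence[where w="\<lambda>x. indicator (cbox al be) x * \<bar>h x\<bar>"])
    show "(\<lambda>x. h x * indicator (box al be) x) \<in> borel_measurable lborel" using hm by simp
    show "?s n \<in> borel_measurable lborel" for n
    proof -
      have "bump (1 / real (Suc n)) al be \<in> borel_measurable borel"
        by (rule borel_measurable_continuous_onI[OF Cinf_cont[OF bump_Cinf]]) simp
      then show ?thesis using hm by (simp add: measurable_lborel1)
    qed
    show "integrable lborel (\<lambda>x. indicator (cbox al be) x * \<bar>h x\<bar>)"
    proof -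
      have "integrable lborel (\<lambda>x. indicator (cbox al be) x * h x)"
        by (rule L2_int_set[OF assms(1)], simp, rule emeasure_lborel_cbox_finite)
      from integrable_abs[OF this] show ?thesis by (simp add: abs_mult)
    qed
    show "AE x in lborel. (\<lambda>n. ?s n x) \<longlonglongrightarrow> h x * indicator (box al be) x"
      by (intro AE_I2 tendsto_mult_left bump_lim)
    show "AE x in lborel. norm (?s n x) \<le> indicator (cbox al be) x * \<bar>h x\<bar>" for n
    proof (rule AE_I2)
      fix x
      have b: "0 \<le> bump (1 / real (Suc n)) al be x" "bump (1 / real (Suc n)) al be x \<le> 1"
        by (rule bump_nonneg, rule bump_le1) simp
      show "norm (?s n x) \<le> indicator (cbox al be) x * \<bar>h x\<bar>"
      proof (cases "x \<in> box al be")
        case True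
        then have "x \<in> cbox al be" using box_subset_cbox by blast
        then show ?thesis using b by (simp add: abs_mult mult_left_le)
      next
        case False
        then show ?thesis using bump_nz[of _ al be x] by simp
      qed
    qed
  qed
  moreover have z: "integral\<^sup>L lborel (?s n) = 0" for n
    using assms(2) bump_Cc[OF _ assms(3,4)] by simp
  ultimately have "(\<lambda>n. 0) \<longlonglongrightarrow> (\<integral>x. h x * indicator (box al be) x \<partial>lborel)"
    by (simp only: z)
  then show ?thesis by (rule LIMSEQ_unique[OF tendsto_const, symmetric])
qed

lemma box_Int_R4: "box (a::R4) b \<inter> box c d = box (\<chi> i. max (a$i) (c$i)) (\<chi> i. min (b$i) (d$i))"
  by (auto simp: mem_box_cart)

lemma FL_box:
  fixes h :: "R4 \<Rightarrow> real"
  assumes h: "L2 h" and hyp: "\<forall>\<phi>\<in>Cc_inf U. (\<integral>x. h x * \<phi> x \<partial>lborel) = 0"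
    and K: "box al be \<noteq> {}" "cbox al be \<subseteq> U"
  shows "AE x in lborel. x \<in> box al be \<longrightarrow> h x = 0"
proof -
  define g where "g x = h x * indicator (box al be) x" for x
  have fin: "emeasure lborel (box al be) < \<infinity>" by (rule emeasure_lborel_box_finite)
  have gi: "integrable lborel g"
    using L2_int_set[OF h _ fin] unfolding g_def by (simp add: mult.commute)
  have boxes: "(LINT x:box a b|lborel. g x) = 0" for a b
  proof -
    define a' :: R4 where "a' = (\<chi> i. max (a$i) (al$i))"
    define b' :: R4 where "b' = (\<chi> i. min (b$i) (be$i))"
    have e: "indicator (box a b) x *\<^sub>R g x = h x * indicator (box a' b') x" for x
      using box_Int_R4[of a b al be] unfolding g_def a'_def b'_def
      by (auto simp: indicator_def)
    show ?thesis
    proof (cases "box a' b' = {}")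
      case True
      then show ?thesis unfolding set_lebesgue_integral_def e by simp
    next
      case False
      have "box a' b' \<subseteq> box al be" using box_Int_R4[of a b al be] a'_def b'_def by auto
      then have "closure (box a' b') \<subseteq> closure (box al be)" by (rule closure_mono)
      then have "cbox a' b' \<subseteq> U" using K False by simp
      from box_integral_zero[OF h hyp False this] show ?thesis
        unfolding set_lebesgue_integral_def e .
    qed
  qed
  let ?G = "range (\<lambda>(a, b). box a b :: R4 set)"
  have allA: "(LINT x:A|lborel. g x) = 0" if "A \<in> sets lborel" for A
  proof -
    have Ist: "Int_stable ?G"
      unfolding Int_stable_def using box_Int_R4 by auto
    have Pow: "?G \<subseteq> Pow UNIV" by simp
    have "sets lborel = sigma_sets UNIV ?G"
      by (simp add: borel_eq_box[where 'a=R4] sets_measure_of)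
    with that have A: "A \<in> sigma_sets UNIV ?G" by simp
    from Ist Pow A show ?thesis
    proof (induction rule: sigma_sets_induct_disjoint)
      case (basic A) then show ?case using boxes by auto
    next
      case empty then show ?case by (simp add: set_lebesgue_integral_def)
    next
      case (compl A)
      have Am: "A \<in> sets lborel" using compl(1) \<open>sets lborel = sigma_sets UNIV ?G\<close> by simp
      have "(LINT x:UNIV - A|lborel. g x) = (\<integral>x. g x - indicator A x * g x \<partial>lborel)"
        unfolding set_lebesgue_integral_def by (rule Bochner_Integration.integral_cong) (auto simp: indicator_def)
      also have "\<dots> = (\<integral>x. g x \<partial>lborel) - (\<integral>x. indicator A x * g x \<partial>lborel)"
        by (rule Bochner_Integration.integral_diff[OF gi integrable_mult_indicator[OF Am gi, simplified]])
      also have "(\<integral>x. g x \<partial>lborel) = 0"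
      proof -
        have "(\<integral>x. g x \<partial>lborel) = (\<integral>x. h x * indicator (box al be) x \<partial>lborel)"
          by (simp add: g_def)
        also have "\<dots> = 0" by (rule box_integral_zero[OF h hyp K])
        finally show ?thesis .
      qed
      also have "(\<integral>x. indicator A x * g x \<partial>lborel) = 0"
        using compl(2) by (simp add: set_lebesgue_integral_def)
      finally show ?case by simp
    next
      case (union A)
      have Am: "\<And>i. A i \<in> sets lborel" using union(2) \<open>sets lborel = sigma_sets UNIV ?G\<close> by auto
      have "(LINT x:(\<Union>i. A i)|lborel. g x) = (\<Sum>i. (LINT x:(A i)|lborel. g x))"
      proof (rule lebesgue_integral_countable_add)
        show "A i \<inter> A j = {}" if "i \<noteq> j" for i j using union(1) that by (auto simp: disjoint_family_on_def)
        show "set_integrable lborel (\<Union>i. A i) g"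
          unfolding set_integrable_def using Am by (intro integrable_mult_indicator gi) auto
      qed (use Am in auto)
      then show ?case using union(3) by simp
    qed
  qed
  have "AE x in lborel. g x = 0"
    by (rule density_unique_real[OF gi integrable_zero]) (use allA in \<open>auto simp: set_lebesgue_integral_def\<close>)
  then show ?thesis by (auto elim!: eventually_mono simp: g_def)
qed

lemma FL:
  fixes h :: "R4 \<Rightarrow> real"
  assumes U: "open U" and h: "L2 h" and hyp: "\<forall>\<phi>\<in>Cc_inf U. (\<integral>x. h x * \<phi> x \<partial>lborel) = 0"
  shows "AE x in lborel. x \<in> U \<longrightarrow> h x = 0"
proof -
  obtain D where D: "countable D" "D \<subseteq> Pow U" "\<And>X. X \<in> D \<Longrightarrow> \<exists>a b. X = cbox a b" "\<Union>D = U"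
    using open_countable_Union_open_cbox[OF U] by metis
  have "AE x in lborel. x \<in> X \<longrightarrow> h x = 0" if XD: "X \<in> D" for X
  proof -
    obtain a b where X: "X = cbox a b" using D(3)[OF XD] by blast
    have XU: "cbox a b \<subseteq> U" using D(2) XD X by auto
    have N: "AE x in lborel. x \<notin> cbox a b - box a b"
      by (rule AE_I'[OF null_sets_cbox_Diff_box]) auto
    show ?thesis
    proof (cases "box a b = {}")
      case True
      then show ?thesis using N X by (auto elim!: eventually_mono)
    next
      case False
      from FL_box[OF h hyp False XU] N show ?thesis unfolding X by eventually_elim auto
    qed
  qed
  then have "AE x in lborel. \<forall>X\<in>D. x \<in> X \<longrightarrow> h x = 0"
    by (rule AE_ball_countable'[OF _ D(1)])
  then show ?thesis using D(4) by (auto elim!: eventually_mono)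
qed

lemma zero_set_negligible:
  fixes \<rho> :: "R4 \<Rightarrow> real"
  assumes rho: "\<rho> \<in> Cinf" and nz: "\<forall>x\<in>S. \<exists>i. pd i \<rho> x \<noteq> 0"
  shows "negligible {x\<in>S. \<rho> x = 0}"
proof -
  define F :: "4 \<Rightarrow> R4 \<Rightarrow> R4" where "F i x = x + (\<rho> x - x $ i) *\<^sub>R axis i 1" for i x
  define S' where "S' i = {x\<in>S. pd i \<rho> x \<noteq> 0}" for i
  have neg: "negligible {x\<in>S' i. F i x \<in> {y. axis i 1 \<bullet> y = 0}}" for i
  proof (rule negligible_differentiable_vimage)
    show "negligible {y::R4. axis i 1 \<bullet> y = 0}"
      by (rule negligible_hyperplane) (simp add: axis_eq_0_iff)
    fix x assume x: "x \<in> S' i"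
    define r' where "r' = frechet_derivative \<rho> (at x)"
    have dr: "(\<rho> has_derivative r') (at x)"
      unfolding r'_def using Cinf_D(1)[OF rho] frechet_derivative_works by blast
    have lin: "linear r'" using has_derivative_linear[OF dr] .
    have li: "((\<lambda>x::R4. x $ i) has_derivative (\<lambda>h. h $ i)) (at x)"
      by (rule bounded_linear_imp_has_derivative) (rule bounded_linear_vec_nth)
    have "(F i has_derivative (\<lambda>h. h + (r' h - h $ i) *\<^sub>R axis i 1)) (at x)"
    proof -
      have d1: "((\<lambda>x. \<rho> x - x $ i) has_derivative (\<lambda>h. r' h - h $ i)) (at x)"
        by (rule has_derivative_diff[OF dr li])
      have d2: "((\<lambda>x. (\<rho> x - x $ i) *\<^sub>R (axis i 1 :: R4)) has_derivative (\<lambda>h. (r' h - h $ i) *\<^sub>R axis i 1)) (at x)"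
        by (rule bounded_linear.has_derivative[OF bounded_linear_scaleR_left d1])
      show ?thesis unfolding F_def[abs_def] by (rule has_derivative_add[OF has_derivative_ident d2])
    qed
    then show "(F i has_derivative (\<lambda>h. h + (r' h - h $ i) *\<^sub>R axis i 1)) (at x within S' i)"
      by (rule has_derivative_at_withinI)
    have pdi: "r' (axis i 1) \<noteq> 0" using x unfolding S'_def pd_def r'_def by simp
    show "inj (\<lambda>h. h + (r' h - h $ i) *\<^sub>R axis i 1)"
    proof (rule injI)
      fix h1 h2 :: R4
      assume eq: "h1 + (r' h1 - h1 $ i) *\<^sub>R axis i 1 = h2 + (r' h2 - h2 $ i) *\<^sub>R axis i 1"
      have ck: "h1 $ k = h2 $ k" if "k \<noteq> i" for k
        using arg_cong[OF eq, of "\<lambda>v. v $ k"] that by (simp add: axis_def)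
      have ci: "r' h1 = r' h2"
        using arg_cong[OF eq, of "\<lambda>v. v $ i"] by (simp add: axis_def)
      define d where "d = h1 - h2"
      have dd: "d = (d $ i) *\<^sub>R axis i 1"
        using ck by (auto simp: vec_eq_iff d_def axis_def)
      then have "r' d = r' ((d $ i) *\<^sub>R axis i 1)" by (rule arg_cong)
      also have "\<dots> = d $ i * r' (axis i 1)" using linear_scale[OF lin] by simp
      finally have "r' d = d $ i * r' (axis i 1)" .
      moreover have "r' d = 0" using ci lin unfolding d_def by (simp add: linear_diff)
      ultimately have "d $ i = 0" using pdi by simp
      then have "d = 0" using \<open>d = (d $ i) *\<^sub>R axis i 1\<close> by simp
      then show "h1 = h2" unfolding d_def by simp
    qed
  qed
  have "{x\<in>S. \<rho> x = 0} \<subseteq> \<Union>(range (\<lambda>i. {x\<in>S' i. F i x \<in> {y. axis i 1 \<bullet> y = 0}}))"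
  proof
    fix x assume x: "x \<in> {x\<in>S. \<rho> x = 0}"
    then obtain i where "pd i \<rho> x \<noteq> 0" using nz by blast
    then have "x \<in> {x\<in>S' i. F i x \<in> {y. axis i 1 \<bullet> y = 0}}"
      using x by (simp add: S'_def F_def inner_axis')
    then show "x \<in> \<Union>(range (\<lambda>i. {x\<in>S' i. F i x \<in> {y. axis i 1 \<bullet> y = 0}}))" by blast
  qed
  moreover have "negligible (\<Union>(range (\<lambda>i. {x\<in>S' i. F i x \<in> {y. axis i 1 \<bullet> y = 0}})))"
    by (rule negligible_Union) (use neg in auto)
  ultimately show ?thesis using negligible_subset by blast
qed

lemma smooth_frontier_negligible:
  assumes sd: "smooth_domain \<Omega>"
  shows "negligible (frontier \<Omega>)"
proof (rule locally_negligible_alt[THEN iffD2], rule ballI)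
  fix p assume p: "p \<in> frontier \<Omega>"
  have op: "open \<Omega>" using sd by (simp add: smooth_domain_def)
  obtain r \<rho> where r: "r > 0" "\<rho> \<in> Cinf" "\<forall>x\<in>ball p r. \<exists>i. pd i \<rho> x \<noteq> 0"
     "\<Omega> \<inter> ball p r = {x\<in>ball p r. \<rho> x < 0}"
  proof -
    have "\<exists>r>0. \<exists>\<rho>\<in>Cinf. (\<forall>x\<in>ball p r. (\<exists>i. pd i \<rho> x \<noteq> 0)) \<and>
        \<Omega> \<inter> ball p r = {x\<in>ball p r. \<rho> x < 0}"
      using sd p unfolding smooth_domain_def by blast
    then show ?thesis using that by blast
  qed
  have r4: "\<And>y. y \<in> ball p r \<Longrightarrow> (y \<in> \<Omega> \<longleftrightarrow> \<rho> y < 0)"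
  proof -
    fix y assume "y \<in> ball p r"
    then show "y \<in> \<Omega> \<longleftrightarrow> \<rho> y < 0" using r(4) unfolding set_eq_iff by blast
  qed
  have sub: "frontier \<Omega> \<inter> ball p r \<subseteq> {x\<in>ball p r. \<rho> x = 0}"
  proof
    fix x assume x: "x \<in> frontier \<Omega> \<inter> ball p r"
    then have xn: "x \<notin> \<Omega>" using op by (simp add: frontier_def interior_open)
    have xc: "x \<in> closure \<Omega>" using x by (simp add: frontier_def)
    have ge: "\<rho> x \<ge> 0"
    proof (rule ccontr)
      assume "\<not> \<rho> x \<ge> 0"
      then show False using xn r4[of x] x by simp
    qed
    have le: "\<rho> x \<le> 0"
    proof (rule ccontr)
      assume "\<not> \<rho> x \<le> 0"
      then have pos: "\<rho> x > 0" by simp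
      have "continuous (at x) \<rho>"
        using Cinf_D(1)[OF r(2)] differentiable_imp_continuous_within by blast
      then have "\<exists>d>0. \<forall>y. dist y x < d \<longrightarrow> dist (\<rho> y) (\<rho> x) < \<rho> x"
        unfolding continuous_at_eps_delta using pos by blast
      then obtain e where e: "e > 0" "\<And>y. dist y x < e \<Longrightarrow> dist (\<rho> y) (\<rho> x) < \<rho> x"
        by blast
      have xb: "x \<in> ball p r" using x by simp
      obtain e2 where e2: "e2 > 0" "ball x e2 \<subseteq> ball p r"
        using openE[OF open_ball xb] by blast
      obtain y where y: "y \<in> \<Omega>" "dist y x < min e e2"
      proof -
        have "0 < min e e2" using e(1) e2(1) by simp
        then have "\<exists>y\<in>\<Omega>. dist y x < min e e2" using xc unfolding closure_approachable by blast
        then show ?thesis using that by blast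
      qed
      have "y \<in> ball p r" using e2(2) y(2) by (auto simp: dist_commute)
      then have "\<rho> y < 0" using y(1) r4 by blast
      moreover have "dist (\<rho> y) (\<rho> x) < \<rho> x" using e(2) y(2) by simp
      ultimately show False using pos by (simp add: dist_real_def)
    qed
    show "x \<in> {x\<in>ball p r. \<rho> x = 0}" using ge le x by simp
  qed
  have "negligible {x\<in>ball p r. \<rho> x = 0}" by (rule zero_set_negligible[OF r(2) r(3)])
  then have "negligible (frontier \<Omega> \<inter> ball p r)" using sub negligible_subset by blast
  moreover have "openin (top_of_set (frontier \<Omega>)) (frontier \<Omega> \<inter> ball p r)"
    by (simp add: openin_open_Int)
  ultimately show "\<exists>U. openin (top_of_set (frontier \<Omega>)) U \<and> p \<in> U \<and> negligible U"
    using p r(1) by (intro exI[of _ "frontier \<Omega> \<inter> ball p r"] conjI) simp_all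
qed

lemma smooth_frontier_AE:
  assumes "smooth_domain \<Omega>"
  shows "AE x in lborel. x \<notin> frontier \<Omega>"
proof -
  have "frontier \<Omega> \<in> null_sets lebesgue"
    using smooth_frontier_negligible[OF assms] by (simp add: negligible_iff_null_sets)
  then have "AE x in lebesgue. x \<notin> frontier \<Omega>" by (rule AE_I') auto
  then show ?thesis by (simp add: AE_completion_iff)
qed

lemma fin_top: "emeasure M A < \<infinity> \<Longrightarrow> emeasure M A < top" by simp

lemma out_cl_zero: assumes "x \<notin> closure {y. \<phi> y \<noteq> (0::real)}" shows "\<phi> x = 0"
proof -
  have "x \<notin> {y. \<phi> y \<noteq> 0}" using assms closure_subset[of "{y. \<phi> y \<noteq> 0}"] by blast
  then show ?thesis by simp
qed

lemma pd_out:
  assumes "\<phi> \<in> Cinf" "x \<notin> closure {y. \<phi> y \<noteq> 0}"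
  shows "pd i \<phi> x = 0"
proof -
  let ?V = "- closure {y. \<phi> y \<noteq> 0}"
  have "((\<lambda>_. 0::real) has_derivative (\<lambda>_. 0)) (at x)" by (rule has_derivative_const)
  then have "(\<phi> has_derivative (\<lambda>_. 0)) (at x)"
  proof (rule has_derivative_transform_within_open[where s="?V"])
    show "open ?V" by auto
    show "x \<in> ?V" using assms(2) by simp
    fix y assume "y \<in> ?V"
    then have "y \<notin> {y. \<phi> y \<noteq> 0}" using closure_subset[of "{y. \<phi> y \<noteq> 0}"] by blast
    then show "0 = \<phi> y" by simp
  qed
  then have "frechet_derivative \<phi> (at x) = (\<lambda>_. 0)" by (rule frechet_derivative_at[symmetric])
  then show ?thesis by (simp add: pd_def)
qed

lemma Cc_zero_out: assumes "\<phi> \<in> Cc_inf U" "x \<notin> U" shows "\<phi> x = 0"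
proof -
  have "closure {y. \<phi> y \<noteq> 0} \<subseteq> U" using assms(1) by (simp add: Cc_inf_def)
  then have "x \<notin> {y. \<phi> y \<noteq> 0}" using assms(2) closure_subset[of "{y. \<phi> y \<noteq> 0}"] by blast
  then show ?thesis by simp
qed

lemma Cc_bounded:
  assumes "\<phi> \<in> Cc_inf U"
  obtains M where "M \<ge> 0" "\<And>x. \<bar>\<phi> x\<bar> \<le> M"
proof -
  let ?K = "closure {y. \<phi> y \<noteq> 0}"
  have K: "compact ?K" "\<phi> \<in> Cinf" using assms by (auto simp: Cc_inf_def)
  have "compact (\<phi> ` ?K)"
    by (rule compact_continuous_image[OF continuous_on_subset[OF Cinf_cont[OF K(2)]] K(1)]) simp
  then obtain M where M: "\<And>y. y \<in> \<phi> ` ?K \<Longrightarrow> norm y \<le> M"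
  proof -
    have "bounded (\<phi> ` ?K)" using \<open>compact (\<phi> ` ?K)\<close> by (rule compact_imp_bounded)
    then show ?thesis using that unfolding bounded_iff by blast
  qed
  have "\<bar>\<phi> x\<bar> \<le> max M 0" for x
  proof (cases "x \<in> ?K")
    case True then show ?thesis using M[of "\<phi> x"] by auto
  next
    case False then have "\<phi> x = 0" by (rule out_cl_zero)
    then show ?thesis by simp
  qed
  then show ?thesis using that[of "max M 0"] by simp
qed

lemma Cc_L2:
  assumes "\<phi> \<in> Cc_inf U"
  shows "L2 \<phi>"
proof -
  let ?K = "closure {y. \<phi> y \<noteq> 0}"
  have K: "compact ?K" "\<phi> \<in> Cinf" using assms by (auto simp: Cc_inf_def)
  obtain M where M: "M \<ge> 0" "\<And>x. \<bar>\<phi> x\<bar> \<le> M" using Cc_bounded[OF assms] by blast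
  have meas: "\<phi> \<in> borel_measurable lborel"
    using borel_measurable_continuous_onI[OF Cinf_cont[OF K(2)]] by (simp add: measurable_lborel1)
  have "integrable lborel (\<lambda>x. (\<phi> x)^2)"
  proof (rule Bochner_Integration.integrable_bound)
    show "integrable lborel (\<lambda>x. M^2 * indicator ?K x)"
      using K(1) by (intro integrable_mult_right integrable_real_indicator)
        (auto intro!: fin_top[OF emeasure_bounded_finite[OF compact_imp_bounded[OF K(1)]]])
    show "(\<lambda>x. (\<phi> x)^2) \<in> borel_measurable lborel" using meas by simp
    show "AE x in lborel. norm ((\<phi> x)^2) \<le> norm (M^2 * indicator ?K x)"
    proof (rule AE_I2)
      fix x
      show "norm ((\<phi> x)^2) \<le> norm (M^2 * indicator ?K x)"
      proof (cases "x \<in> ?K")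
        case True
        have "\<bar>\<phi> x\<bar>^2 \<le> M^2" by (rule power_mono[OF M(2)]) simp
        then show ?thesis using True by simp
      next
        case False then have "\<phi> x = 0" by (rule out_cl_zero)
        then show ?thesis by simp
      qed
    qed
  qed
  then show ?thesis using meas by (simp add: L2_def)
qed

lemma L2_diff_sq:
  assumes "L2 f" "L2 g"
  shows "integrable lborel (\<lambda>x. (f x - g x)^2)"
proof (rule Bochner_Integration.integrable_bound)
  show "integrable lborel (\<lambda>x. 2 * (f x)^2 + 2 * (g x)^2)"
    using assms by (auto simp: L2_def)
  show "(\<lambda>x. (f x - g x)^2) \<in> borel_measurable lborel" using assms by (auto simp: L2_def)
  show "AE x in lborel. norm ((f x - g x)^2) \<le> norm (2 * (f x)^2 + 2 * (g x)^2)"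
  proof (rule AE_I2)
    fix x
    have "(f x - g x)^2 \<le> 2 * (f x)^2 + 2 * (g x)^2"
      using zero_le_power2[of "f x + g x"] by (simp add: power2_eq_square algebra_simps)
    then show "norm ((f x - g x)^2) \<le> norm (2 * (f x)^2 + 2 * (g x)^2)" by simp
  qed
qed

lemma H1_L2: "u \<in> H1 \<Longrightarrow> L2 u" by (simp add: H1_def)

lemma grad_props:
  assumes "u \<in> H1"
  shows "\<forall>i. L2 (\<lambda>x. grad u x $ i)" "weak_grad u (grad u)"
proof -
  have "\<exists>g. (\<forall>i. L2 (\<lambda>x. g x $ i)) \<and> weak_grad u g" using assms by (simp add: H1_def)
  from someI_ex[OF this] show "\<forall>i. L2 (\<lambda>x. grad u x $ i)" "weak_grad u (grad u)"
    unfolding grad_def by blast+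
qed

lemma u_zero_out:
  assumes "u \<in> H10 \<Omega>" and op: "open \<Omega>"
  shows "AE x in lborel. x \<notin> \<Omega> \<longrightarrow> u x = 0"
proof -
  obtain \<phi> where \<phi>: "\<And>n. \<phi> n \<in> Cc_inf \<Omega>" "(\<lambda>n. H1norm_sq (\<lambda>x. \<phi> n x - u x)) \<longlonglongrightarrow> 0"
    using assms unfolding H10_def by blast
  have u: "L2 u" using assms by (simp add: H10_def H1_def)
  have um: "u \<in> borel_measurable lborel" using u by (simp add: L2_def)
  have ui: "integrable lborel (\<lambda>x. (u x)^2)" using u by (simp add: L2_def)
  have sv: "\<Omega> \<in> sets lborel \<Longrightarrow> True" by simp
  let ?F = "\<lambda>x. indicator (- \<Omega>) x * (u x)^2"
  have bound: "integral\<^sup>L lborel ?F \<le> H1norm_sq (\<lambda>x. \<phi> n x - u x)" for n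
  proof -
    have "integral\<^sup>L lborel ?F \<le> (\<integral>x. (\<phi> n x - u x)^2 \<partial>lborel)"
    proof (rule integral_mono_AE')
      show "integrable lborel (\<lambda>x. (\<phi> n x - u x)^2)" by (rule L2_diff_sq[OF Cc_L2[OF \<phi>(1)] u])
      show "AE x in lborel. ?F x \<le> (\<phi> n x - u x)^2"
      proof (rule AE_I2)
        fix x show "?F x \<le> (\<phi> n x - u x)^2"
        proof (cases "x \<in> \<Omega>")
          case True then show ?thesis by simp
        next
          case False then show ?thesis using Cc_zero_out[OF \<phi>(1) False] by simp
        qed
      qed
      show "AE x in lborel. 0 \<le> (\<phi> n x - u x)^2" by simp
    qed
    also have "\<dots> \<le> H1norm_sq (\<lambda>x. \<phi> n x - u x)"
      unfolding H1norm_sq_def by (simp add: integral_nonneg_AE)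
    finally show ?thesis .
  qed
  have "integral\<^sup>L lborel ?F \<le> 0"
    by (rule tendsto_lowerbound[OF \<phi>(2)]) (use bound in \<open>auto intro: always_eventually\<close>)
  moreover have "integral\<^sup>L lborel ?F \<ge> 0" by (rule integral_nonneg_AE) simp
  ultimately have z: "integral\<^sup>L lborel ?F = 0" by simp
  have Fi: "integrable lborel ?F"
  proof (rule Bochner_Integration.integrable_bound[OF ui])
    show "?F \<in> borel_measurable lborel" using um op by (auto intro!: borel_measurable_times borel_measurable_indicator)
    show "AE x in lborel. norm (?F x) \<le> norm ((u x)^2)" by (rule AE_I2) (simp add: indicator_def)
  qed
  have "AE x in lborel. ?F x = 0"
    using integral_nonneg_eq_0_iff_AE[OF Fi] z by simp
  then show ?thesis by (auto elim!: eventually_mono simp: indicator_def)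
qed

lemma Cc_UNIV: "\<phi> \<in> Cc_inf U \<Longrightarrow> \<phi> \<in> Cc_inf UNIV"
  by (simp add: Cc_inf_def)

lemma wg: "weak_grad u g \<Longrightarrow> \<phi> \<in> Cc_inf U \<Longrightarrow>
    (\<integral>x. u x * pd i \<phi> x \<partial>lborel) = - (\<integral>x. g x $ i * \<phi> x \<partial>lborel)"
  unfolding weak_grad_def using Cc_UNIV by blast

lemma zero_H1: "(\<lambda>_. 0) \<in> H1"
proof -
  have L: "L2 (\<lambda>_::R4. 0::real)" by (simp add: L2_def)
  have "weak_grad (\<lambda>_. 0) (\<lambda>_. 0)" by (simp add: weak_grad_def)
  then show ?thesis using L unfolding H1_def by (auto intro!: exI[of _ "\<lambda>_. 0"])
qed

lemma grad_zero: "AE x in lborel. grad (\<lambda>_. 0) x = 0"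
proof -
  note G = grad_props[OF zero_H1]
  have "AE x in lborel. x \<in> UNIV \<longrightarrow> grad (\<lambda>_. 0) x $ i = 0" for i
  proof (rule FL)
    show "L2 (\<lambda>x. grad (\<lambda>_. 0) x $ i)" using G(1) by blast
    show "\<forall>\<phi>\<in>Cc_inf UNIV. (\<integral>x. grad (\<lambda>_. 0) x $ i * \<phi> x \<partial>lborel) = 0"
    proof
      fix \<phi> assume "\<phi> \<in> Cc_inf UNIV"
      from wg[OF G(2) this, of i] show "(\<integral>x. grad (\<lambda>_. 0) x $ i * \<phi> x \<partial>lborel) = 0" by simp
    qed
  qed simp
  then have "AE x in lborel. \<forall>i\<in>UNIV. grad (\<lambda>_. 0) x $ i = 0"
    by (intro AE_finite_allI) auto
  then show ?thesis by (auto elim!: eventually_mono simp: vec_eq_iff)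
qed

lemma grad_zero_out:
  assumes sd: "smooth_domain \<Omega>" and u: "u \<in> H10 \<Omega>"
  shows "AE x in lborel. x \<notin> \<Omega> \<longrightarrow> grad u x = 0"
proof -
  have op: "open \<Omega>" using sd by (simp add: smooth_domain_def)
  have uH: "u \<in> H1" using u by (simp add: H10_def)
  note G = grad_props[OF uH]
  note uz = u_zero_out[OF u op]
  let ?U = "- closure \<Omega>"
  have "AE x in lborel. x \<in> ?U \<longrightarrow> grad u x $ i = 0" for i
  proof (rule FL)
    show "open ?U" by auto
    show "L2 (\<lambda>x. grad u x $ i)" using G(1) by blast
    show "\<forall>\<phi>\<in>Cc_inf ?U. (\<integral>x. grad u x $ i * \<phi> x \<partial>lborel) = 0"
    proof
      fix \<phi> assume \<phi>: "\<phi> \<in> Cc_inf ?U"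
      have "(\<integral>x. u x * pd i \<phi> x \<partial>lborel) = 0"
      proof (rule integral_eq_zero_AE)
        show "AE x in lborel. u x * pd i \<phi> x = 0"
          using uz
        proof eventually_elim
          case (elim x)
          show ?case
          proof (cases "x \<in> \<Omega>")
            case True
            have "closure {y. \<phi> y \<noteq> 0} \<subseteq> ?U" using \<phi> by (simp add: Cc_inf_def)
            moreover have "x \<in> closure \<Omega>" using True closure_subset by blast
            ultimately have "x \<notin> closure {y. \<phi> y \<noteq> 0}" by blast
            then have "pd i \<phi> x = 0" using pd_out \<phi> by (simp add: Cc_inf_def)
            then show ?thesis by simp
          next
            case False then show ?thesis using elim by simp
          qed
        qed
      qed
      then show "(\<integral>x. grad u x $ i * \<phi> x \<partial>lborel) = 0"
        using wg[OF G(2) \<phi>, of i] by simp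
    qed
  qed
  then have "AE x in lborel. \<forall>i\<in>UNIV. x \<in> ?U \<longrightarrow> grad u x $ i = 0"
    by (intro AE_finite_allI) auto
  with smooth_frontier_AE[OF sd]
  show ?thesis
  proof eventually_elim
    case (elim x)
    show ?case
    proof
      assume xn: "x \<notin> \<Omega>"
      have "x \<in> ?U"
      proof
        assume "x \<in> closure \<Omega>"
        then have "x \<in> frontier \<Omega>" using xn op by (simp add: frontier_def interior_open)
        then show False using elim by blast
      qed
      then show "grad u x = 0" using elim by (simp add: vec_eq_iff)
    qed
  qed
qed

lemma grad_norm_meas:
  assumes "u \<in> H1"
  shows "(\<lambda>x. (norm (grad u x))^2) \<in> borel_measurable lborel"
proof -
  have c: "(\<lambda>x. grad u x $ i) \<in> borel_measurable lborel" for i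
    using grad_props(1)[OF assms] by (simp add: L2_def)
  have e: "(norm (grad u x))^2 = (\<Sum>i\<in>UNIV. grad u x $ i * grad u x $ i)" for x
    by (simp add: power2_norm_eq_inner inner_vec_def)
  show ?thesis unfolding e using c by (intro borel_measurable_sum borel_measurable_times) auto
qed

lemma ereal_inf_sum:
  fixes F G :: "'a \<Rightarrow> real" and c :: ereal
  assumes H: "\<And>x y. x \<in> A \<Longrightarrow> y \<in> B \<Longrightarrow> c \<le> ereal (F x) + ereal (G y)"
  shows "c \<le> Inf (ereal ` F ` A) + Inf (ereal ` G ` B)"
proof (cases "A = {} \<or> B = {}")
  case True
  then show ?thesis by (auto simp: top_ereal_def)
next
  case False
  then obtain x0 y0 where x0: "x0 \<in> A" and y0: "y0 \<in> B" by blast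
  show ?thesis
  proof (cases c)
    case MInf then show ?thesis by simp
  next
    case PInf
    with H[OF x0 y0] show ?thesis by simp
  next
    case (real r)
    let ?IA = "Inf (ereal ` F ` A)" and ?IB = "Inf (ereal ` G ` B)"
    have lowA: "ereal (r - G y) \<le> ?IA" if "y \<in> B" for y
    proof (rule Inf_greatest)
      fix z assume "z \<in> ereal ` F ` A"
      then obtain x where x: "x \<in> A" "z = ereal (F x)" by blast
      have "ereal r \<le> ereal (F x + G y)" using H[OF x(1) that] real by simp
      then show "ereal (r - G y) \<le> z" using x by simp
    qed
    have upA: "?IA \<le> ereal (F x0)" using x0 by (intro Inf_lower) auto
    obtain s where s: "?IA = ereal s"
      using lowA[OF y0] upA by (cases ?IA) auto
    have lowB: "ereal (r - s) \<le> ?IB"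
    proof (rule Inf_greatest)
      fix z assume "z \<in> ereal ` G ` B"
      then obtain y where y: "y \<in> B" "z = ereal (G y)" by blast
      have "ereal (r - G y) \<le> ereal s" using lowA[OF y(1)] s by simp
      then show "ereal (r - s) \<le> z" using y by simp
    qed
    have upB: "?IB \<le> ereal (G y0)" using y0 by (intro Inf_lower) auto
    obtain t where t: "?IB = ereal t"
      using lowB upB by (cases ?IB) auto
    have "r - s \<le> t" using lowB t by simp
    then show ?thesis using real s t by simp
  qed
qed

lemma Dq_eq:
  assumes sd: "smooth_domain \<Omega>" and u: "u \<in> H10 \<Omega>" and ac: "continuous_on UNIV a"
    and az: "\<And>x. x \<in> \<Omega> \<Longrightarrow> a x = 0"
  shows "Dq a kk lam u = (\<integral>x\<in>\<Omega>. (norm (grad u x))^2 + kk * (u x)^2 \<partial>lborel)"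
proof -
  have op: "open \<Omega>" using sd by (simp add: smooth_domain_def)
  have uH: "u \<in> H1" using u by (simp add: H10_def)
  have um: "u \<in> borel_measurable lborel" using uH by (simp add: H1_def L2_def)
  have am: "a \<in> borel_measurable lborel"
    using borel_measurable_continuous_onI[OF ac] by (simp add: measurable_lborel1)
  note gm = grad_norm_meas[OF uH]
  show ?thesis
    unfolding Dq_def set_lebesgue_integral_def
  proof (rule integral_cong_AE)
    show "(\<lambda>x. (norm (grad u x))^2 + (lam * a x + kk) * (u x)^2) \<in> borel_measurable lborel"
      using gm am um by measurable
    have f: "(\<lambda>x. (norm (grad u x))^2 + kk * (u x)^2) \<in> borel_measurable lborel"
      using gm um by measurable
    have Om: "\<Omega> \<in> sets lborel" using op by simp
    show "(\<lambda>x. indicator \<Omega> x *\<^sub>R ((norm (grad u x))^2 + kk * (u x)^2)) \<in> borel_measurable lborel"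
      by (rule borel_measurable_scaleR[OF borel_measurable_indicator[OF Om] f])
    show "AE x in lborel. (norm (grad u x))^2 + (lam * a x + kk) * (u x)^2 =
        indicator \<Omega> x *\<^sub>R ((norm (grad u x))^2 + kk * (u x)^2)"
      using u_zero_out[OF u op] grad_zero_out[OF sd u]
      by eventually_elim (auto simp: az indicator_def)
  qed
qed

lemma u4_eq:
  assumes op: "open \<Omega>" and u: "u \<in> H10 \<Omega>"
  shows "(\<integral>x. (u x)^4 \<partial>lborel) = (\<integral>x\<in>\<Omega>. (u x)^4 \<partial>lborel)"
proof -
  have um: "u \<in> borel_measurable lborel" using u by (simp add: H10_def H1_def L2_def)
  show ?thesis
    unfolding set_lebesgue_integral_def
  proof (rule integral_cong_AE)
    show "(\<lambda>x. (u x)^4) \<in> borel_measurable lborel" using um by measurable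
    have f: "(\<lambda>x. (u x)^4) \<in> borel_measurable lborel" using um by measurable
    have Om: "\<Omega> \<in> sets lborel" using op by simp
    show "(\<lambda>x. indicator \<Omega> x *\<^sub>R (u x)^4) \<in> borel_measurable lborel"
      by (rule borel_measurable_scaleR[OF borel_measurable_indicator[OF Om] f])
    show "AE x in lborel. (u x)^4 = indicator \<Omega> x *\<^sub>R (u x)^4"
      using u_zero_out[OF u op] by eventually_elim (auto simp: indicator_def)
  qed
qed

lemma Dq_zero: "Dq a a0 lam (\<lambda>_. 0) = 0"
  unfolding Dq_def by (rule integral_eq_zero_AE) (use grad_zero in \<open>auto elim!: eventually_mono\<close>)

lemma Neh_props:
  assumes sd: "smooth_domain \<Omega>" and ac: "continuous_on UNIV a" and az: "\<forall>x\<in>\<Omega>. a x = 0"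
    and u: "u \<in> Neh \<Omega> c"
  shows "u \<in> H10 \<Omega>" "u \<in> H1" "nonzero u" "Dq a c lam u - (\<integral>x. (u x)^4 \<partial>lborel) = 0"
    "I_dom \<Omega> c u = 1/2 * Dq a c lam u - 1/4 * (\<integral>x. (u x)^4 \<partial>lborel)"
proof -
  have op: "open \<Omega>" using sd by (simp add: smooth_domain_def)
  show uH0: "u \<in> H10 \<Omega>" and "nonzero u" using u by (auto simp: Neh_def)
  then show "u \<in> H1" by (simp add: H10_def)
  have d: "dI_dom \<Omega> c u = 0" using u by (simp add: Neh_def)
  have eD: "Dq a c lam u = (\<integral>x\<in>\<Omega>. (norm (grad u x))^2 + c * (u x)^2 \<partial>lborel)"
    by (rule Dq_eq[OF sd uH0 ac]) (use az in blast)
  note e = eD u4_eq[OF op uH0]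
  show "Dq a c lam u - (\<integral>x. (u x)^4 \<partial>lborel) = 0" using d unfolding e dI_dom_def .
  show "I_dom \<Omega> c u = 1/2 * Dq a c lam u - 1/4 * (\<integral>x. (u x)^4 \<partial>lborel)"
    unfolding e I_dom_def ..
qed

lemma u4_meas: assumes "u \<in> H1" shows "(\<lambda>x. (u x)^4) \<in> borel_measurable lborel"
proof -
  have "u \<in> borel_measurable lborel" using assms by (simp add: H1_def L2_def)
  then show ?thesis by measurable
qed

lemma u_meas: assumes "u \<in> H1" shows "u \<in> borel_measurable lborel"
  using assms by (simp add: H1_def L2_def)

theorem lemma3p8:
  fixes a b :: "R4 \<Rightarrow> real" and a_inf b_inf a0 b0 lam :: real
  assumes D1: "continuous_on UNIV a" "continuous_on UNIV b" "\<forall>x. a x \<ge> 0" "\<forall>x. b x \<ge> 0"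
    and D2: "(a \<longlongrightarrow> a_inf) at_infinity" "a_inf > 0" "\<forall>x. a x \<le> a_inf"
            "(b \<longlongrightarrow> b_inf) at_infinity" "b_inf > 0" "\<forall>x. b x \<le> b_inf"
    and D3: "smooth_domain (interior (a -` {0}))" "bounded (interior (a -` {0}))"
            "closure (interior (a -` {0})) = a -` {0}"
            "smooth_domain (interior (b -` {0}))" "bounded (interior (b -` {0}))"
            "closure (interior (b -` {0})) = b -` {0}"
            "closure (interior (a -` {0})) \<inter> closure (interior (b -` {0})) = {}"
    and lam: "lam > 0"
    and posdef: "\<forall>u\<in>H1. \<forall>v\<in>H1. (nonzero u \<or> nonzero v) \<longrightarrow> D_lam a b a0 b0 lam u v > 0"
  shows "\<forall>\<beta>::real.
     m_dom (interior (a -` {0})) a0 + m_dom (interior (b -` {0})) b0 \<ge> m_sys a b a0 b0 lam \<beta> \<and>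
     min (m_dom (interior (a -` {0})) a0) (m_dom (interior (b -` {0})) b0) \<ge> mstar_sys a b a0 b0 lam \<beta>"
proof (intro allI conjI)
  fix \<beta> :: real
  define Oa where "Oa = interior (a -` {0})"
  define Ob where "Ob = interior (b -` {0})"
  have sda: "smooth_domain Oa" and sdb: "smooth_domain Ob" using D3 by (simp_all add: Oa_def Ob_def)
  have aza: "\<forall>x\<in>Oa. a x = 0" using interior_subset unfolding Oa_def by blast
  have azb: "\<forall>x\<in>Ob. b x = 0" using interior_subset unfolding Ob_def by blast
  have disj: "Oa \<inter> Ob = {}"
    using D3(7) closure_subset[of Oa] closure_subset[of Ob] unfolding Oa_def Ob_def by blast
  have opa: "open Oa" and opb: "open Ob" using sda sdb by (simp_all add: smooth_domain_def)
  note Pa = Neh_props[OF sda D1(1) aza]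
  note Pb = Neh_props[OF sdb D1(2) azb]
  have Dqa0: "Dq a a0 lam (\<lambda>_. 0) = 0" and Dqb0: "Dq b b0 lam (\<lambda>_. 0) = 0" by (rule Dq_zero)+
  have inta: "integrable lborel (\<lambda>x. (u x)^4)" if u: "u \<in> Neh Oa a0" for u
  proof (rule ccontr)
    assume ni: "\<not> integrable lborel (\<lambda>x. (u x)^4)"
    then have "(\<integral>x. (u x)^4 \<partial>lborel) = 0" by (rule not_integrable_integral_eq)
    then have "Dq a a0 lam u = 0" using Pa(4)[OF u, of lam] by simp
    then have "D_lam a b a0 b0 lam u (\<lambda>_. 0) = 0" by (simp add: D_lam_def Dqb0)
    moreover have "D_lam a b a0 b0 lam u (\<lambda>_. 0) > 0"
      using posdef Pa(2,3)[OF u] zero_H1 by blast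
    ultimately show False by simp
  qed
  have intb: "integrable lborel (\<lambda>x. (u x)^4)" if u: "u \<in> Neh Ob b0" for u
  proof (rule ccontr)
    assume ni: "\<not> integrable lborel (\<lambda>x. (u x)^4)"
    then have "(\<integral>x. (u x)^4 \<partial>lborel) = 0" by (rule not_integrable_integral_eq)
    then have "Dq b b0 lam u = 0" using Pb(4)[OF u, of lam] by simp
    then have "D_lam a b a0 b0 lam (\<lambda>_. 0) u = 0" by (simp add: D_lam_def Dqa0)
    moreover have "D_lam a b a0 b0 lam (\<lambda>_. 0) u > 0"
      using posdef Pb(2,3)[OF u] zero_H1 by blast
    ultimately show False by simp
  qed
  have keyB: "m_sys a b a0 b0 lam \<beta> \<le> ereal (I_dom Oa a0 u) + ereal (I_dom Ob b0 v)"
    if u: "u \<in> Neh Oa a0" and v: "v \<in> Neh Ob b0" for u v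
  proof -
    have uH: "u \<in> H1" and vH: "v \<in> H1" using Pa(2)[OF u] Pb(2)[OF v] .
    have um: "u \<in> borel_measurable lborel" and vm: "v \<in> borel_measurable lborel"
      using u_meas[OF uH] u_meas[OF vH] .
    have uv0: "AE x in lborel. (u x)^2 * (v x)^2 = 0"
      using u_zero_out[OF Pa(1)[OF u] opa] u_zero_out[OF Pb(1)[OF v] opb]
    proof eventually_elim
      case (elim x)
      show ?case
      proof (cases "x \<in> Oa")
        case True then have "x \<notin> Ob" using disj by blast
        then show ?thesis using elim by simp
      next
        case False then show ?thesis using elim by simp
      qed
    qed
    have i1: "(\<integral>x. (u x)^4 + \<beta> * (u x)^2 * (v x)^2 \<partial>lborel) = (\<integral>x. (u x)^4 \<partial>lborel)"
      by (rule integral_cong_AE) (use um vm uv0 in \<open>auto elim!: eventually_mono\<close>)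
    have i2: "(\<integral>x. (v x)^4 + \<beta> * (v x)^2 * (u x)^2 \<partial>lborel) = (\<integral>x. (v x)^4 \<partial>lborel)"
      by (rule integral_cong_AE) (use um vm uv0 in \<open>auto elim!: eventually_mono simp: mult.commute\<close>)
    have i3: "(\<integral>x. (u x)^4 + (v x)^4 + 2 * \<beta> * (u x)^2 * (v x)^2 \<partial>lborel)
        = (\<integral>x. (u x)^4 \<partial>lborel) + (\<integral>x. (v x)^4 \<partial>lborel)"
    proof -
      have "(\<integral>x. (u x)^4 + (v x)^4 + 2 * \<beta> * (u x)^2 * (v x)^2 \<partial>lborel) = (\<integral>x. (u x)^4 + (v x)^4 \<partial>lborel)"
        by (rule integral_cong_AE) (use um vm uv0 in \<open>auto elim!: eventually_mono\<close>)
      also have "\<dots> = (\<integral>x. (u x)^4 \<partial>lborel) + (\<integral>x. (v x)^4 \<partial>lborel)"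
        by (rule Bochner_Integration.integral_add[OF inta[OF u] intb[OF v]])
      finally show ?thesis .
    qed
    have "(u, v) \<in> N_sys a b a0 b0 lam \<beta>"
      unfolding N_sys_def dJ1_def using uH vH Pa(3,4)[OF u] Pb(3,4)[OF v] i1 i2 by simp
    then have "m_sys a b a0 b0 lam \<beta> \<le> ereal (J a b a0 b0 lam \<beta> u v)"
      unfolding m_sys_def by (rule Inf_lower[OF rev_image_eqI]) simp
    also have "J a b a0 b0 lam \<beta> u v = I_dom Oa a0 u + I_dom Ob b0 v"
      unfolding J_def D_lam_def i3 Pa(5)[OF u, of lam] Pb(5)[OF v, of lam] by (simp add: algebra_simps)
    finally show ?thesis by simp
  qed
  show "m_dom (interior (a -` {0})) a0 + m_dom (interior (b -` {0})) b0 \<ge> m_sys a b a0 b0 lam \<beta>"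
    unfolding m_dom_def Oa_def[symmetric] Ob_def[symmetric]
    by (rule ereal_inf_sum) (rule keyB)
  have A1: "mstar_sys a b a0 b0 lam \<beta> \<le> m_dom Oa a0"
    unfolding m_dom_def
  proof (rule Inf_greatest)
    fix z assume "z \<in> ereal ` I_dom Oa a0 ` Neh Oa a0"
    then obtain u where u: "u \<in> Neh Oa a0" and z: "z = ereal (I_dom Oa a0 u)" by blast
    have "(u, \<lambda>_. 0) \<in> M_sys a b a0 b0 lam \<beta>"
      unfolding M_sys_def dJ1_def using Pa(2,3,4)[OF u] zero_H1 Dqb0 by simp
    then have "mstar_sys a b a0 b0 lam \<beta> \<le> ereal (J a b a0 b0 lam \<beta> u (\<lambda>_. 0))"
      unfolding mstar_sys_def by (rule Inf_lower[OF rev_image_eqI]) simp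
    also have "J a b a0 b0 lam \<beta> u (\<lambda>_. 0) = I_dom Oa a0 u"
      unfolding J_def D_lam_def Pa(5)[OF u, of lam] by (simp add: Dqb0)
    finally show "mstar_sys a b a0 b0 lam \<beta> \<le> z" using z by simp
  qed
  have A2: "mstar_sys a b a0 b0 lam \<beta> \<le> m_dom Ob b0"
    unfolding m_dom_def
  proof (rule Inf_greatest)
    fix z assume "z \<in> ereal ` I_dom Ob b0 ` Neh Ob b0"
    then obtain u where u: "u \<in> Neh Ob b0" and z: "z = ereal (I_dom Ob b0 u)" by blast
    have "((\<lambda>_. 0), u) \<in> M_sys a b a0 b0 lam \<beta>"
      unfolding M_sys_def dJ1_def using Pb(2,3,4)[OF u] zero_H1 Dqa0 by simp
    then have "mstar_sys a b a0 b0 lam \<beta> \<le> ereal (J a b a0 b0 lam \<beta> (\<lambda>_. 0) u)"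
      unfolding mstar_sys_def by (rule Inf_lower[OF rev_image_eqI]) simp
    also have "J a b a0 b0 lam \<beta> (\<lambda>_. 0) u = I_dom Ob b0 u"
      unfolding J_def D_lam_def Pb(5)[OF u, of lam] by (simp add: Dqa0)
    finally show "mstar_sys a b a0 b0 lam \<beta> \<le> z" using z by simp
  qed
  show "min (m_dom (interior (a -` {0})) a0) (m_dom (interior (b -` {0})) b0) \<ge> mstar_sys a b a0 b0 lam \<beta>"
    using A1 A2 unfolding Oa_def Ob_def by simp
qed

end
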